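(* Let $\mathbf{X}\sim\mathcal{MMN}_p(\mathbf{0},\overline{\mathbf{\Omega}},\boldsymbol{\delta};H)$, i.e. $\mathbf{X}=\boldsymbol{\delta}U+\mathbf{Z}$ with $\mathbf{Z}\sim\mathcal{N}_p(\mathbf{0},\mathbf{\Sigma}_{\mathbf{X}})$ independent of $U\sim H$, where $\mathbf{\Sigma}_{\mathbf{X}}=\overline{\mathbf{\Omega}}-\boldsymbol{\delta}\boldsymbol{\delta}^\top$, and assume the moment generating function $M_U$ of $U$ is finite in a neighbourhood of $0$. Then, with $\mathrm{E}(U^k)=M_U^{(k)}(0)$, $$M_1(\mathbf{X})=\mathrm{E}[U]\boldsymbol{\delta},\qquad M_2(\mathbf{X})=\mathbf{\Sigma}_{\mathbf{X}}+\mathrm{E}[U^2](\boldsymbol{\delta}\otimes\boldsymbol{\delta}^\top),$$ $$M_3(\mathbf{X})=\mathrm{E}[U]\{\boldsymbol{\delta}\otimes\mathbf{\Sigma}_{\mathbf{X}}+\mathrm{vec}(\mathbf{\Sigma}_{\mathbf{X}})\boldsymbol{\delta}^\top+(\mathbf{I}_p\otimes\boldsymbol{\delta})\mathbf{\Sigma}_{\mathbf{X}}\}+\mathrm{E}[U^3](\mathbf{I}_p\otimes\boldsymbol{\delta})(\boldsymbol{\delta}\otimes\boldsymbol{\delta}^\top),$$ $$\begin{aligned}M_4(\mathbf{X})={}&(\mathbf{I}_{p^2}+\mathbf{U}_{p,p})(\mathbf{\Sigma}_{\mathbf{X}}\otimes\mathbf{\Sigma}_{\mathbf{X}})+\mathr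m{vec}(\mathbf{\Sigma}_{\mathbf{X}})(\mathrm{vec}(\mathbf{\Sigma}_{\mathbf{X}}))^\top\\&+\mathrm{E}[U^2]\big[\boldsymbol{\delta}\otimes\boldsymbol{\delta}^\top\otimes\mathbf{\Sigma}_{\mathbf{X}}+\boldsymbol{\delta}\otimes\mathbf{\Sigma}_{\mathbf{X}}\otimes\boldsymbol{\delta}^\top+\mathbf{\Sigma}_{\mathbf{X}}\otimes\boldsymbol{\delta}\otimes\boldsymbol{\delta}^\top+\boldsymbol{\delta}^\top\otimes\mathbf{\Sigma}_{\mathbf{X}}\otimes\boldsymbol{\delta}\\&\qquad+\boldsymbol{\delta}^\top\otimes\mathrm{vec}(\mathbf{\Sigma}_{\mathbf{X}})\otimes\boldsymbol{\delta}^\top+(\boldsymbol{\delta}\otimes\boldsymbol{\delta})(\mathrm{vec}(\mathbf{\Sigma}_{\mathbf{X}}))^\top\big]+\mathrm{E}[U^4]\,\boldsymbol{\delta}\boldsymbol{\delta}^\top\otimes\boldsymbol{\delta}\boldsymbol{\delta}^\top.\end{aligned}$$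
   Context: $\overline{\mathbf{\Omega}}$ is a $p\times p$ correlation matrix, $\boldsymbol{\delta}\in\mathbb{R}^p$ with $\overline{\mathbf{\Omega}}-\boldsymbol{\delta}\boldsymbol{\delta}^\top$ positive definite, $U$ a real random variable with CDF $H$. For a random vector $\mathbf{X}$ the moments are defined by $M_1(\mathbf{X})=\mathrm{E}(\mathbf{X})$, $M_2(\mathbf{X})=\mathrm{E}(\mathbf{X}\otimes\mathbf{X}^\top)=\mathrm{E}(\mathbf{X}\mathbf{X}^\top)$, $M_3(\mathbf{X})=\mathrm{E}(\mathbf{X}\otimes\mathbf{X}^\top\otimes\mathbf{X})$ (a $p^2\times p$ matrix), $M_4(\mathbf{X})=\mathrm{E}(\mathbf{X}\mathbf{X}^\top\otimes\mathbf{X}\mathbf{X}^\top)$ (a $p^2\times p^2$ matrix). $\otimes$ is the Kronecker product, $\mathrm{vec}(\mathbf{A})$ stacks the columns of $\mathbf{A}$ into one column vector, and $\mathbf{U}_{p,p}$ is the $p^2\times p^2$ commutation matrix (satisfying $\mathbf{U}_{p,p}\mathrm{vec}(\mathbf{A})=\mathrm{vec}(\mathbf{A}^\top)$ for $p\times p$ matrices $\mathbf{A}$). $M_U^{(k)}$ denotes the $k$-th derivative of $M_U(t)=\mathrm{E}[e^{tU}]$. *)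

theory Defs
  imports "HOL-Probability.Probability" "Jordan_Normal_Form.Matrix"
begin

definition kron :: "real mat \<Rightarrow> real mat \<Rightarrow> real mat" where
  "kron A B = mat (dim_row A * dim_row B) (dim_col A * dim_col B)
     (\<lambda>(i,j). A $$ (i div dim_row B, j div dim_col B) * B $$ (i mod dim_row B, j mod dim_col B))"

(* vec(A): stack the columns of A into one column (an (m*n) x 1 matrix) *)
definition vecm :: "real mat \<Rightarrow> real mat" where
  "vecm A = mat (dim_row A * dim_col A) 1 (\<lambda>(i,_). A $$ (i mod dim_row A, i div dim_row A))"

(* commutation matrix U_{m,n}: the mn x mn matrix with U_{m,n} vec(A) = vec(A^T) for A m x n *)
definition commutation_mat :: "nat \<Rightarrow> nat \<Rightarrow> real mat" where
  "commutation_mat m n = mat (m * n) (m * n)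
     (\<lambda>(r,c). if c = r div n + (r mod n) * m then 1 else 0)"

definition correlation_mat :: "nat \<Rightarrow> real mat \<Rightarrow> bool" where
  "correlation_mat p A \<longleftrightarrow> A \<in> carrier_mat p p \<and> transpose_mat A = A \<and>
     (\<forall>i<p. A $$ (i,i) = 1) \<and>
     (\<forall>v \<in> carrier_vec p. 0 \<le> scalar_prod v (A *\<^sub>v v))"

definition pos_def_mat :: "nat \<Rightarrow> real mat \<Rightarrow> bool" where
  "pos_def_mat p A \<longleftrightarrow> A \<in> carrier_mat p p \<and> transpose_mat A = A \<and>
     (\<forall>v \<in> carrier_vec p. v \<noteq> 0\<^sub>v p \<longrightarrow> 0 < scalar_prod v (A *\<^sub>v v))"

definition centred_mvnormal :: "'a measure \<Rightarrow> nat \<Rightarrow> (nat \<Rightarrow> 'a \<Rightarrow> real) \<Rightarrow> real mat \<Rightarrow> bool" where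
  "centred_mvnormal M p Z S \<longleftrightarrow>
     (\<forall>i<p. Z i \<in> borel_measurable M) \<and>
     (\<forall>a :: nat \<Rightarrow> real.
        (CLINT \<omega>|M. cis (\<Sum>i<p. a i * Z i \<omega>)) =
        complex_of_real (exp (- (\<Sum>i<p. \<Sum>j<p. a i * S $$ (i,j) * a j) / 2)))"

definition mat_expect :: "'a measure \<Rightarrow> nat \<Rightarrow> nat \<Rightarrow> ('a \<Rightarrow> real mat) \<Rightarrow> real mat" where
  "mat_expect M r c F = mat r c (\<lambda>ij. integral\<^sup>L M (\<lambda>\<omega>. F \<omega> $$ ij))"

end

theory Submission
  imports Defs
begin

lemma pow_le_exp: fixes x :: real assumes "0 \<le> x" shows "x ^ m / fact m \<le> exp x"
proof -
  obtain t where t: "exp x = (\<Sum>k<Suc m. x ^ k / fact k) + exp t / fact (Suc m) * x ^ Suc m"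
    using Maclaurin_exp_le[of x "Suc m"] by blast
  have "x ^ m / fact m \<le> (\<Sum>k<Suc m. x ^ k / fact k)"
    using assms by (intro member_le_sum) auto
  also have "\<dots> \<le> exp x" unfolding t using assms by simp
  finally show ?thesis .
qed

lemma abs_pow_le_exp: fixes u d :: real assumes "0 < d"
  shows "\<bar>u\<bar> ^ m \<le> fact m / d ^ m * exp (d * \<bar>u\<bar>)"
proof -
  have "(d * \<bar>u\<bar>) ^ m / fact m \<le> exp (d * \<bar>u\<bar>)" using assms by (intro pow_le_exp) auto
  then show ?thesis using assms by (simp add: field_simps power_mult_distrib)
qed

lemma exp_taylor2: fixes x :: real shows "\<bar>exp x - 1 - x\<bar> \<le> x^2 * exp \<bar>x\<bar>"
proof -
  obtain t where t: "\<bar>t\<bar> \<le> \<bar>x\<bar>" "exp x = (\<Sum>k<2. x ^ k / fact k) + exp t / fact 2 * x ^ 2"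
    using Maclaurin_exp_le[of x 2] by blast
  have eq: "exp x - 1 - x = exp t / 2 * x^2" using t(2) by (simp add: numeral_2_eq_2)
  have et: "exp t \<le> exp \<bar>x\<bar>" using t(1) by simp
  have "\<bar>exp x - 1 - x\<bar> = exp t / 2 * x^2" unfolding eq by (intro abs_of_nonneg) simp
  also have "\<dots> \<le> exp \<bar>x\<bar> * x^2"
  proof (rule mult_right_mono)
    show "exp t / 2 \<le> exp \<bar>x\<bar>" using et exp_gt_zero[of t] by linarith
  qed simp
  also have "\<dots> = x^2 * exp \<bar>x\<bar>" by (rule mult.commute)
  finally show ?thesis .
qed

lemma bnd_lemma: fixes u t h h0 :: real assumes h: "\<bar>h\<bar> < h0"
  shows "\<bar>u^n * exp((t+h)*u) - u^n*exp(t*u) - h*(u^Suc n * exp(t*u))\<bar> \<le> h^2 * (\<bar>u\<bar>^(n+2) * exp(t*u) * exp(h0*\<bar>u\<bar>))"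
proof -
  have e1: "exp ((t + h) * u) = exp (t * u) * exp (h * u)"
    by (simp add: distrib_right exp_add)
  have "u^n * exp((t+h)*u) - u^n*exp(t*u) - h*(u^Suc n * exp(t*u)) = u ^ n * exp (t * u) * (exp (h * u) - 1 - h * u)"
    unfolding e1 by (simp add: algebra_simps)
  then have "\<bar>u^n * exp((t+h)*u) - u^n*exp(t*u) - h*(u^Suc n * exp(t*u))\<bar> = \<bar>u\<bar> ^ n * exp (t * u) * \<bar>exp (h * u) - 1 - h * u\<bar>"
    by (simp add: abs_mult power_abs)
  also have "\<dots> \<le> \<bar>u\<bar> ^ n * exp (t * u) * ((h * u)^2 * exp \<bar>h * u\<bar>)"
    by (intro mult_left_mono exp_taylor2) auto
  also have "\<dots> \<le> \<bar>u\<bar> ^ n * exp (t * u) * ((h * u)^2 * exp (h0 * \<bar>u\<bar>))"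
  proof -
    have "\<bar>h * u\<bar> \<le> h0 * \<bar>u\<bar>" using h by (simp add: abs_mult mult_right_mono)
    then show ?thesis by (intro mult_left_mono) auto
  qed
  also have "\<dots> = h^2 * (\<bar>u\<bar> ^ (n+2) * exp (t * u) * exp (h0 * \<bar>u\<bar>))"
  proof -
    have "\<bar>u\<bar> ^ (n+2) = \<bar>u\<bar>^n * u^2" by (metis power_add power2_abs)
    then show ?thesis by (simp only: power_mult_distrib) (simp only: mult_ac)
  qed
  finally show ?thesis .
qed

lemma deriv_from_lim: fixes f :: "real \<Rightarrow> real"
  assumes "((\<lambda>h. (f (t + h) - f t) / h - D) \<longlongrightarrow> 0) (at 0)"
  shows "(f has_real_derivative D) (at t)"
proof -
  have "((\<lambda>h. (f (t + h) - f t) / h) \<longlongrightarrow> D) (at 0)"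
    using assms by (rule LIM_zero_cancel)
  then show ?thesis by (simp only: DERIV_def)
qed

locale mgf_setting =
  fixes M :: "'a measure" and U :: "'a \<Rightarrow> real" and e :: real
  assumes P: "prob_space M" and U_rv[measurable]: "U \<in> borel_measurable M" and e_pos: "0 < e"
    and mgf_int: "\<And>t. \<bar>t\<bar> < e \<Longrightarrow> integrable M (\<lambda>\<omega>. exp (t * U \<omega>))"
begin

lemma int_exp_abs: assumes "0 \<le> b" "b < e" shows "integrable M (\<lambda>\<omega>. exp (b * \<bar>U \<omega>\<bar>))"
proof (rule Bochner_Integration.integrable_bound)
  show "integrable M (\<lambda>\<omega>. exp (b * U \<omega>) + exp ((-b) * U \<omega>))"
    using assms by (intro Bochner_Integration.integrable_add mgf_int) auto
  show "AE x in M. norm (exp (b * \<bar>U x\<bar>)) \<le> norm (exp (b * U x) + exp ((-b) * U x))"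
  proof (intro AE_I2)
    fix x
    have d: "exp (b * \<bar>U x\<bar>) = exp (b * U x) \<or> exp (b * \<bar>U x\<bar>) = exp ((-b) * U x)"
      by (cases "U x \<ge> 0") simp_all
    have "exp (b * \<bar>U x\<bar>) \<le> exp (b * U x) + exp ((-b) * U x)"
      using d exp_gt_zero[of "b * U x"] exp_gt_zero[of "(-b) * U x"] by (elim disjE) linarith+
    then show "norm (exp (b * \<bar>U x\<bar>)) \<le> norm (exp (b * U x) + exp ((-b) * U x))" by simp
  qed
qed simp

lemma int_A1: assumes "\<bar>s\<bar> + h0 < e" "0 \<le> h0"
  shows "integrable M (\<lambda>\<omega>. \<bar>U \<omega>\<bar> ^ m * exp (s * U \<omega>) * exp (h0 * \<bar>U \<omega>\<bar>))"
proof -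
  define d where "d = (e - \<bar>s\<bar> - h0) / 2"
  define b where "b = \<bar>s\<bar> + h0 + d"
  have d: "0 < d" and b: "0 \<le> b" "b < e" using assms by (auto simp: d_def b_def field_simps)
  show ?thesis
  proof (rule Bochner_Integration.integrable_bound)
    show "integrable M (\<lambda>\<omega>. fact m / d ^ m * exp (b * \<bar>U \<omega>\<bar>))"
      using int_exp_abs[OF b] by simp
    show "AE x in M. norm (\<bar>U x\<bar> ^ m * exp (s * U x) * exp (h0 * \<bar>U x\<bar>)) \<le> norm (fact m / d ^ m * exp (b * \<bar>U x\<bar>))"
    proof (intro AE_I2)
      fix x
      have 1: "\<bar>U x\<bar> ^ m \<le> fact m / d ^ m * exp (d * \<bar>U x\<bar>)" using abs_pow_le_exp[OF d] .
      have 2: "exp (s * U x) \<le> exp (\<bar>s\<bar> * \<bar>U x\<bar>)"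
        by (simp add: abs_mult[symmetric] abs_ge_self)
      have "\<bar>U x\<bar> ^ m * exp (s * U x) * exp (h0 * \<bar>U x\<bar>) \<le>
            (fact m / d ^ m * exp (d * \<bar>U x\<bar>)) * exp (\<bar>s\<bar> * \<bar>U x\<bar>) * exp (h0 * \<bar>U x\<bar>)"
        using d by (intro mult_right_mono mult_mono 1 2) auto
      also have "\<dots> = fact m / d ^ m * exp (b * \<bar>U x\<bar>)"
        by (simp add: b_def distrib_right mult_exp_exp)
      finally show "norm (\<bar>U x\<bar> ^ m * exp (s * U x) * exp (h0 * \<bar>U x\<bar>)) \<le> norm (fact m / d ^ m * exp (b * \<bar>U x\<bar>))"
        using d by simp
    qed
  qed simp
qed

lemma int_A0: assumes "\<bar>s\<bar> < e" shows "integrable M (\<lambda>\<omega>. U \<omega> ^ m * exp (s * U \<omega>))"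
proof (rule Bochner_Integration.integrable_bound)
  show "integrable M (\<lambda>\<omega>. \<bar>U \<omega>\<bar> ^ m * exp (s * U \<omega>) * exp (0 * \<bar>U \<omega>\<bar>))"
    using assms by (intro int_A1) auto
qed (auto simp: abs_mult power_abs)

lemma int_mom: "integrable M (\<lambda>\<omega>. U \<omega> ^ m)"
  using int_A0[of 0 m] e_pos by simp

definition g :: "nat \<Rightarrow> real \<Rightarrow> real" where
  "g n t = integral\<^sup>L M (\<lambda>\<omega>. U \<omega> ^ n * exp (t * U \<omega>))"

lemma deriv_g: assumes t: "\<bar>t\<bar> < e" shows "(g n has_real_derivative g (Suc n) t) (at t)"
proof -
  define h0 where "h0 = (e - \<bar>t\<bar>) / 2"
  have h0: "0 < h0" "\<bar>t\<bar> + h0 < e" using t by (auto simp: h0_def field_simps)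
  define C where "C = integral\<^sup>L M (\<lambda>\<omega>. \<bar>U \<omega>\<bar> ^ (n+2) * exp (t * U \<omega>) * exp (h0 * \<bar>U \<omega>\<bar>))"
  have intC: "integrable M (\<lambda>\<omega>. \<bar>U \<omega>\<bar> ^ (n+2) * exp (t * U \<omega>) * exp (h0 * \<bar>U \<omega>\<bar>))"
    using h0 by (intro int_A1) auto
  have key: "\<bar>g n (t + h) - g n t - h * g (Suc n) t\<bar> \<le> h^2 * C" if h: "\<bar>h\<bar> < h0" for h
  proof -
    let ?F = "\<lambda>\<omega>. U \<omega> ^ n * exp ((t + h) * U \<omega>) - U \<omega> ^ n * exp (t * U \<omega>) - h * (U \<omega> ^ Suc n * exp (t * U \<omega>))"
    have i1: "integrable M (\<lambda>\<omega>. U \<omega> ^ n * exp ((t + h) * U \<omega>))" using h h0 by (intro int_A0) auto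
    have i2: "integrable M (\<lambda>\<omega>. U \<omega> ^ n * exp (t * U \<omega>))" using t by (intro int_A0) auto
    have i3: "integrable M (\<lambda>\<omega>. U \<omega> ^ Suc n * exp (t * U \<omega>))" using t by (intro int_A0) auto
    have iF: "integrable M ?F"
      by (intro Bochner_Integration.integrable_diff integrable_mult_right i1 i2 i3)
    have "integral\<^sup>L M ?F = integral\<^sup>L M (\<lambda>\<omega>. U \<omega> ^ n * exp ((t + h) * U \<omega>) - U \<omega> ^ n * exp (t * U \<omega>))
       - integral\<^sup>L M (\<lambda>\<omega>. h * (U \<omega> ^ Suc n * exp (t * U \<omega>)))"
      by (intro Bochner_Integration.integral_diff Bochner_Integration.integrable_diff integrable_mult_right i1 i2 i3)
    also have "\<dots> = g n (t + h) - g n t - h * g (Suc n) t"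
      unfolding g_def by (simp only: Bochner_Integration.integral_diff[OF i1 i2] integral_mult_right_zero)
    finally have eq: "g n (t + h) - g n t - h * g (Suc n) t = integral\<^sup>L M ?F" by simp
    have bnd: "\<bar>?F \<omega>\<bar> \<le> h^2 * (\<bar>U \<omega>\<bar> ^ (n+2) * exp (t * U \<omega>) * exp (h0 * \<bar>U \<omega>\<bar>))" for \<omega>
      by (rule bnd_lemma[OF h])
    have "\<bar>integral\<^sup>L M ?F\<bar> \<le> integral\<^sup>L M (\<lambda>\<omega>. \<bar>?F \<omega>\<bar>)" by (rule integral_abs_bound)
    also have "\<dots> \<le> integral\<^sup>L M (\<lambda>\<omega>. h^2 * (\<bar>U \<omega>\<bar> ^ (n+2) * exp (t * U \<omega>) * exp (h0 * \<bar>U \<omega>\<bar>)))"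
      by (intro integral_mono integrable_abs integrable_mult_right iF intC bnd)
    also have "\<dots> = h^2 * C" by (simp add: C_def)
    finally show ?thesis using eq by simp
  qed
  have "((\<lambda>h. (g n (t + h) - g n t) / h - g (Suc n) t) \<longlongrightarrow> 0) (at 0)"
  proof (rule Lim_null_comparison)
    show "eventually (\<lambda>h. norm ((g n (t + h) - g n t) / h - g (Suc n) t) \<le> \<bar>h\<bar> * C) (at 0)"
      unfolding eventually_at
    proof (intro exI[of _ h0] conjI allI ballI impI)
      fix h :: real assume "h \<noteq> 0 \<and> dist h 0 < h0"
      then have hh: "h \<noteq> 0" "\<bar>h\<bar> < h0" by auto
      have "(g n (t + h) - g n t) / h - g (Suc n) t = (g n (t + h) - g n t - h * g (Suc n) t) / h"
        using hh by (simp add: field_simps)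
      then have "norm ((g n (t + h) - g n t) / h - g (Suc n) t) = \<bar>g n (t + h) - g n t - h * g (Suc n) t\<bar> / \<bar>h\<bar>"
        by simp
      also have "\<dots> \<le> h^2 * C / \<bar>h\<bar>" using key[OF hh(2)] hh by (intro divide_right_mono) auto
      also have "\<dots> = \<bar>h\<bar> * C" using hh by (cases "h \<ge> 0") (simp_all add: power2_eq_square)
      finally show "norm ((g n (t + h) - g n t) / h - g (Suc n) t) \<le> \<bar>h\<bar> * C" .
    qed (use h0 in auto)
    show "((\<lambda>h. \<bar>h\<bar> * C) \<longlongrightarrow> 0) (at 0)"
    proof -
      have "((\<lambda>h. \<bar>h\<bar> * C) \<longlongrightarrow> \<bar>0\<bar> * C) (at (0::real))" by (intro tendsto_intros)
      then show ?thesis by simp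
    qed
  qed
  then show ?thesis by (rule deriv_from_lim)
qed

lemma funpow_deriv_g: "\<bar>t\<bar> < e \<Longrightarrow> (deriv ^^ k) (g 0) t = g k t"
proof (induction k arbitrary: t)
  case 0 then show ?case by simp
next
  case (Suc k)
  have "((deriv ^^ k) (g 0) has_real_derivative g (Suc k) t) (at t)"
  proof (rule has_field_derivative_transform_within_open[OF deriv_g[OF Suc.prems]])
    show "open {-e<..<e}" by simp
    show "t \<in> {-e<..<e}" using Suc.prems by auto
    show "g k x = (deriv ^^ k) (g 0) x" if "x \<in> {-e<..<e}" for x
      using Suc.IH[of x] that by auto
  qed
  then show ?case by (simp add: DERIV_imp_deriv)
qed

lemma mgf_derivs: "(deriv ^^ k) (\<lambda>t. integral\<^sup>L M (\<lambda>\<omega>. exp (t * U \<omega>))) 0 = integral\<^sup>L M (\<lambda>\<omega>. U \<omega> ^ k)"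
proof -
  have "(\<lambda>t. integral\<^sup>L M (\<lambda>\<omega>. exp (t * U \<omega>))) = g 0" by (simp add: g_def fun_eq_iff)
  then show ?thesis using funpow_deriv_g[of 0 k] e_pos by (simp add: g_def)
qed

end


locale gauss_setting =
  fixes M :: "'a measure" and p :: nat and Z :: "nat \<Rightarrow> 'a \<Rightarrow> real" and S :: "real mat"
  assumes P: "prob_space M" and Zn: "centred_mvnormal M p Z S"
begin

interpretation prob_space M by (rule P)

lemma Z_meas[measurable]: "i < p \<Longrightarrow> Z i \<in> borel_measurable M"
  using Zn unfolding centred_mvnormal_def by auto

definition Y :: "(nat \<Rightarrow> real) \<Rightarrow> 'a \<Rightarrow> real" where
  "Y a \<omega> = (\<Sum>i<p. a i * Z i \<omega>)"

definition q :: "(nat \<Rightarrow> real) \<Rightarrow> real" where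
  "q a = (\<Sum>i<p. \<Sum>j<p. a i * S $$ (i,j) * a j)"

lemma Y_meas[measurable]: "Y a \<in> borel_measurable M"
  unfolding Y_def by (intro borel_measurable_sum borel_measurable_times borel_measurable_const Z_meas) auto

lemma hyp: "(CLINT \<omega>|M. cis (\<Sum>i<p. b i * Z i \<omega>)) = complex_of_real (exp (- (\<Sum>i<p. \<Sum>j<p. b i * S $$ (i,j) * b j) / 2))"
  using Zn unfolding centred_mvnormal_def by blast

lemma char_Y: "char (distr M borel (Y a)) t = complex_of_real (exp (- (t^2 * q a) / 2))"
proof -
  have "char (distr M borel (Y a)) t = (CLINT \<omega>|M. iexp (t * Y a \<omega>))"
    unfolding char_def by (subst integral_distr) auto
  also have "\<dots> = (CLINT \<omega>|M. cis (\<Sum>i<p. (t * a i) * Z i \<omega>))"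
    by (intro Bochner_Integration.integral_cong refl)
       (simp add: cis_conv_exp Y_def sum_distrib_left mult.assoc)
  also have "\<dots> = complex_of_real (exp (- (\<Sum>i<p. \<Sum>j<p. (t * a i) * S $$ (i,j) * (t * a j)) / 2))"
    by (rule hyp)
  also have "(\<Sum>i<p. \<Sum>j<p. (t * a i) * S $$ (i,j) * (t * a j)) = t^2 * q a"
    unfolding q_def by (simp add: sum_distrib_left power2_eq_square mult_ac)
  finally show ?thesis .
qed

lemma q_nonneg: "0 \<le> q a"
proof -
  interpret D: real_distribution "distr M borel (Y a)" by simp
  have "norm (char (distr M borel (Y a)) 1) \<le> 1" by (rule D.cmod_char_le_1)
  then have "exp (- q a / 2) \<le> 1" by (simp add: char_Y)
  then show ?thesis by simp
qed

lemma distr_Y: "distr M borel (Y a) = distr std_normal_distribution borel (\<lambda>x. sqrt (q a) * x)"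
proof (rule Levy_uniqueness)
  show "real_distribution (distr M borel (Y a))" by simp
  interpret N: real_distribution std_normal_distribution by (rule real_dist_normal_dist)
  show "real_distribution (distr std_normal_distribution borel (\<lambda>x. sqrt (q a) * x))"
    by (intro N.real_distribution_distr) simp
  show "char (distr M borel (Y a)) = char (distr std_normal_distribution borel (\<lambda>x. sqrt (q a) * x))"
  proof
    fix t
    have "char (distr std_normal_distribution borel (\<lambda>x. sqrt (q a) * x)) t
          = char std_normal_distribution (t * sqrt (q a))"
      unfolding char_def by (subst integral_distr) (auto simp: mult_ac)
    also have "\<dots> = complex_of_real (exp (- (t^2 * q a) / 2))"
      using q_nonneg[of a] by (simp add: char_std_normal_distribution power_mult_distrib)
    finally show "char (distr M borel (Y a)) t = char (distr std_normal_distribution borel (\<lambda>x. sqrt (q a) * x)) t"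
      by (simp add: char_Y)
  qed
qed

lemma Y_pow: "integrable M (\<lambda>\<omega>. Y a \<omega> ^ n)
   \<and> integral\<^sup>L M (\<lambda>\<omega>. Y a \<omega> ^ n) = sqrt (q a) ^ n * integral\<^sup>L std_normal_distribution (\<lambda>x. x ^ n)"
proof -
  have "integrable (distr std_normal_distribution borel (\<lambda>x. sqrt (q a) * x)) (\<lambda>x. x ^ n)
        \<longleftrightarrow> integrable std_normal_distribution (\<lambda>x. (sqrt (q a) * x) ^ n)"
    by (subst integrable_distr_eq) auto
  moreover have "integrable std_normal_distribution (\<lambda>x. (sqrt (q a) * x) ^ n)"
    unfolding power_mult_distrib by (intro integrable_mult_right integrable_std_normal_distribution_moment)
  ultimately have "integrable (distr M borel (Y a)) (\<lambda>x. x ^ n)" by (simp add: distr_Y)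
  then have i: "integrable M (\<lambda>\<omega>. Y a \<omega> ^ n)" by (subst (asm) integrable_distr_eq) auto
  have "integral\<^sup>L M (\<lambda>\<omega>. Y a \<omega> ^ n) = integral\<^sup>L (distr M borel (Y a)) (\<lambda>x. x ^ n)"
    by (subst integral_distr) auto
  also have "\<dots> = integral\<^sup>L std_normal_distribution (\<lambda>x. (sqrt (q a) * x) ^ n)"
    unfolding distr_Y by (subst integral_distr) auto
  also have "\<dots> = sqrt (q a) ^ n * integral\<^sup>L std_normal_distribution (\<lambda>x. x ^ n)"
    unfolding power_mult_distrib by simp
  finally show ?thesis using i by simp
qed

lemma Y_int: "integrable M (\<lambda>\<omega>. Y a \<omega> ^ n)" using Y_pow by blast

lemma Y_m1: "integral\<^sup>L M (Y a) = 0"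
  using Y_pow[of a 1] integral_std_normal_distribution_moment_odd[of 1] by simp

lemma Y_m2: "integral\<^sup>L M (\<lambda>\<omega>. Y a \<omega> ^ 2) = q a"
  using Y_pow[of a 2] std_normal_distribution_even_moments(1)[of 1] q_nonneg[of a] by simp

lemma Y_m3: "integral\<^sup>L M (\<lambda>\<omega>. Y a \<omega> ^ 3) = 0"
  using Y_pow[of a 3] integral_std_normal_distribution_moment_odd[of 3] by simp

lemma Y_m4: "integral\<^sup>L M (\<lambda>\<omega>. Y a \<omega> ^ 4) = 3 * (q a)^2"
proof -
  have "sqrt (q a) ^ 4 = (q a)^2" using q_nonneg[of a]
    by (metis power2_eq_square power_mult real_sqrt_pow2 numeral_Bit0 mult_2 )
  moreover have "integral\<^sup>L std_normal_distribution (\<lambda>x. x ^ 4) = 3"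
    using std_normal_distribution_even_moments(1)[of 2] by (simp add: fact_numeral)
  ultimately show ?thesis using Y_pow[of a 4] by simp
qed

end


definition Pol4 :: "(real \<Rightarrow> real \<Rightarrow> real \<Rightarrow> real \<Rightarrow> real) \<Rightarrow> real" where
  "Pol4 F = F 1 1 1 1 - F 0 1 1 1 - F 1 0 1 1 - F 1 1 0 1 - F 1 1 1 0
     + F 0 0 1 1 + F 0 1 0 1 + F 0 1 1 0 + F 1 0 0 1 + F 1 0 1 0 + F 1 1 0 0
     - F 1 0 0 0 - F 0 1 0 0 - F 0 0 1 0 - F 0 0 0 1 + F 0 0 0 0"

definition Pol3 :: "(real \<Rightarrow> real \<Rightarrow> real \<Rightarrow> real) \<Rightarrow> real" where
  "Pol3 F = F 1 1 1 - F 0 1 1 - F 1 0 1 - F 1 1 0 + F 1 0 0 + F 0 1 0 + F 0 0 1 - F 0 0 0"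

definition Pol2 :: "(real \<Rightarrow> real \<Rightarrow> real) \<Rightarrow> real" where
  "Pol2 F = F 1 1 - F 0 1 - F 1 0 + F 0 0"

lemma pol4_pow: "Pol4 (\<lambda>e1 e2 e3 e4. (e1* x1+e2* x2+e3* x3+e4* x4)^4) = 24* x1* x2* x3* x4"
  unfolding Pol4_def by (simp add: eval_nat_numeral algebra_simps)

lemma pol3_pow: "Pol3 (\<lambda>e1 e2 e3. (e1* x1+e2* x2+e3* x3)^3) = 6* x1* x2* x3"
  unfolding Pol3_def by (simp add: eval_nat_numeral algebra_simps)

lemma pol2_pow: "Pol2 (\<lambda>e1 e2. (e1* x1+e2* x2)^2) = 2* x1* x2"
  unfolding Pol2_def by (simp add: eval_nat_numeral algebra_simps)

lemma alg4: fixes d1 d2 d3 d4 s11 s12 s13 s14 s22 s23 s24 s33 s34 s44 m2 m4 :: real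
  shows "Pol4 (\<lambda>e1 e2 e3 e4. (e1* d1+e2* d2+e3* d3+e4* d4)^4 * m4
     + 6 * (e1* d1+e2* d2+e3* d3+e4* d4)^2 * m2 * (e1* e1* s11 + e2* e2* s22 + e3* e3* s33 + e4* e4* s44
          + 2* e1* e2* s12 + 2* e1* e3* s13 + 2* e1* e4* s14 + 2* e2* e3* s23 + 2* e2* e4* s24 + 2* e3* e4* s34)
     + 3 * (e1* e1* s11 + e2* e2* s22 + e3* e3* s33 + e4* e4* s44
          + 2* e1* e2* s12 + 2* e1* e3* s13 + 2* e1* e4* s14 + 2* e2* e3* s23 + 2* e2* e4* s24 + 2* e3* e4* s34)^2)
   = 24 * (s12* s34 + s13* s24 + s14* s23 + m2*(d1* d2* s34 + d1* d3* s24 + d1* d4* s23 + d2* d3* s14 + d2* d4* s13 + d3* d4* s12) + m4* d1* d2* d3* d4)"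
  unfolding Pol4_def by (simp add: eval_nat_numeral algebra_simps)

lemma alg3: fixes d1 d2 d3 s11 s12 s13 s22 s23 s33 m1 m3 :: real
  shows "Pol3 (\<lambda>e1 e2 e3. (e1* d1+e2* d2+e3* d3)^3 * m3
     + 3 * (e1* d1+e2* d2+e3* d3) * m1 * (e1* e1* s11 + e2* e2* s22 + e3* e3* s33
          + 2* e1* e2* s12 + 2* e1* e3* s13 + 2* e2* e3* s23))
   = 6 * (m1*(d1* s23 + d2* s13 + d3* s12) + m3* d1* d2* d3)"
  unfolding Pol3_def by (simp add: eval_nat_numeral algebra_simps)

lemma alg2: fixes d1 d2 s11 s12 s22 m2 :: real
  shows "Pol2 (\<lambda>e1 e2. (e1* d1+e2* d2)^2 * m2 + (e1* e1* s11 + e2* e2* s22 + 2* e1* e2* s12))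
   = 2 * (s12 + m2* d1* d2)"
  unfolding Pol2_def by (simp add: eval_nat_numeral algebra_simps)

lemma integral_Pol4:
  assumes "\<And>e1 e2 e3 e4. integrable M (G e1 e2 e3 e4)"
  shows "integrable M (\<lambda>\<omega>. Pol4 (\<lambda>e1 e2 e3 e4. G e1 e2 e3 e4 \<omega>))"
    and "integral\<^sup>L M (\<lambda>\<omega>. Pol4 (\<lambda>e1 e2 e3 e4. G e1 e2 e3 e4 \<omega>)) = Pol4 (\<lambda>e1 e2 e3 e4. integral\<^sup>L M (G e1 e2 e3 e4))"
  unfolding Pol4_def using assms by auto

lemma integral_Pol3:
  assumes "\<And>e1 e2 e3. integrable M (G e1 e2 e3)"
  shows "integrable M (\<lambda>\<omega>. Pol3 (\<lambda>e1 e2 e3. G e1 e2 e3 \<omega>))"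
    and "integral\<^sup>L M (\<lambda>\<omega>. Pol3 (\<lambda>e1 e2 e3. G e1 e2 e3 \<omega>)) = Pol3 (\<lambda>e1 e2 e3. integral\<^sup>L M (G e1 e2 e3))"
  unfolding Pol3_def using assms by auto

lemma integral_Pol2:
  assumes "\<And>e1 e2. integrable M (G e1 e2)"
  shows "integrable M (\<lambda>\<omega>. Pol2 (\<lambda>e1 e2. G e1 e2 \<omega>))"
    and "integral\<^sup>L M (\<lambda>\<omega>. Pol2 (\<lambda>e1 e2. G e1 e2 \<omega>)) = Pol2 (\<lambda>e1 e2. integral\<^sup>L M (G e1 e2))"
  unfolding Pol2_def using assms by auto


lemma vimage_family_sub:
  assumes g: "g \<in> measurable N K" and fg: "\<And>\<omega>. \<omega> \<in> space M \<Longrightarrow> f \<omega> = g (h \<omega>)"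
    and h: "\<And>\<omega>. \<omega> \<in> space M \<Longrightarrow> h \<omega> \<in> space N"
  shows "{f -` A \<inter> space M | A. A \<in> sets K} \<subseteq> {h -` B \<inter> space M | B. B \<in> sets N}"
proof
  fix X assume "X \<in> {f -` A \<inter> space M | A. A \<in> sets K}"
  then obtain A where X: "X = f -` A \<inter> space M" and A: "A \<in> sets K" by auto
  have "X = h -` (g -` A \<inter> space N) \<inter> space M" using fg h X by auto
  moreover have "g -` A \<inter> space N \<in> sets N" using measurable_sets[OF g A] .
  ultimately show "X \<in> {h -` B \<inter> space M | B. B \<in> sets N}" by blast
qed

definition ind :: "nat \<Rightarrow> nat \<Rightarrow> real" where "ind i n = (if n = i then 1 else 0)"

lemma sum_indL: "i < p \<Longrightarrow> (\<Sum>n<p. ind i n * f n) = f i"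
proof -
  assume "i < p"
  have "(\<Sum>n<p. ind i n * f n) = (\<Sum>n<p. if n = i then f n else 0)"
    by (intro sum.cong) (auto simp: ind_def)
  also have "\<dots> = f i" using \<open>i < p\<close> by (simp add: sum.delta)
  finally show ?thesis .
qed

lemma sum_indR: "i < p \<Longrightarrow> (\<Sum>n<p. f n * ind i n) = f i"
  using sum_indL[of i p f] by (simp add: mult.commute)

locale main_setting = mgf_setting M U e + gauss_setting M p Z S
  for M :: "'a measure" and U e p Z S +
  fixes delta :: "real mat"
  assumes indep: "prob_space.indep_set M
                  {U -` A \<inter> space M | A. A \<in> sets borel}
                  {(\<lambda>\<omega>. \<lambda>i\<in>{..<p}. Z i \<omega>) -` B \<inter> space M | B.
                     B \<in> sets (Pi\<^sub>M {..<p} (\<lambda>_. borel :: real measure))}"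
    and S_sym: "\<And>i j. i < p \<Longrightarrow> j < p \<Longrightarrow> S $$ (j,i) = S $$ (i,j)"
begin

interpretation prob_space M by (rule mgf_setting.P[OF mgf_setting_axioms])

definition x :: "nat \<Rightarrow> 'a \<Rightarrow> real" where "x i \<omega> = delta $$ (i,0) * U \<omega> + Z i \<omega>"

abbreviation mU :: "nat \<Rightarrow> real" where "mU k \<equiv> integral\<^sup>L M (\<lambda>\<omega>. U \<omega> ^ k)"

lemma V_meas: "(\<lambda>\<omega>. \<lambda>i\<in>{..<p}. Z i \<omega>) \<in> M \<rightarrow>\<^sub>M Pi\<^sub>M {..<p} (\<lambda>_. borel)"
  by (rule measurable_restrict) (auto intro: Z_meas)

lemma indep_UY: "indep_var borel (\<lambda>\<omega>. U \<omega> ^ k) borel (\<lambda>\<omega>. Y a \<omega> ^ m)"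
proof -
  let ?V = "\<lambda>\<omega>. \<lambda>i\<in>{..<p}. Z i \<omega>"
  define \<phi> where "\<phi> = (\<lambda>v::nat\<Rightarrow>real. (\<Sum>i<p. a i * v i) ^ m)"
  have \<phi>m: "\<phi> \<in> borel_measurable (Pi\<^sub>M {..<p} (\<lambda>_. borel))" unfolding \<phi>_def by measurable
  have Yeq: "Y a \<omega> ^ m = \<phi> (?V \<omega>)" for \<omega> unfolding \<phi>_def Y_def
    by (auto intro!: sum.cong arg_cong[where f="\<lambda>x. x ^ m"])
  have ind: "indep_sets (case_bool {U -` A \<inter> space M | A. A \<in> sets borel}
        {?V -` B \<inter> space M | B. B \<in> sets (Pi\<^sub>M {..<p} (\<lambda>_. borel :: real measure))}) UNIV"
    using indep unfolding indep_set_def .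
  show ?thesis
    unfolding indep_var_def indep_vars_def2
  proof (intro conjI ballI)
    fix i :: bool
    show "random_variable (case_bool borel borel i) (case_bool (\<lambda>\<omega>. U \<omega> ^ k) (\<lambda>\<omega>. Y a \<omega> ^ m) i)"
      by (cases i) auto
  next
    show "indep_sets (\<lambda>i. {case_bool (\<lambda>\<omega>. U \<omega> ^ k) (\<lambda>\<omega>. Y a \<omega> ^ m) i -` A \<inter> space M |A.
            A \<in> sets (case_bool borel borel i)}) UNIV"
    proof (rule indep_sets_mono_sets[OF ind])
      fix i :: bool
      show "{case_bool (\<lambda>\<omega>. U \<omega> ^ k) (\<lambda>\<omega>. Y a \<omega> ^ m) i -` A \<inter> space M |A. A \<in> sets (case_bool borel borel i)}
        \<subseteq> case_bool {U -` A \<inter> space M | A. A \<in> sets borel}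
        {?V -` B \<inter> space M | B. B \<in> sets (Pi\<^sub>M {..<p} (\<lambda>_. borel :: real measure))} i"
      proof (cases i)
        case True
        have "{(\<lambda>\<omega>. U \<omega> ^ k) -` A \<inter> space M |A. A \<in> sets borel} \<subseteq> {U -` A \<inter> space M | A. A \<in> sets borel}"
          by (rule vimage_family_sub[where g="\<lambda>x::real. x ^ k"]) auto
        then show ?thesis using True by simp
      next
        case False
        have "{(\<lambda>\<omega>. Y a \<omega> ^ m) -` A \<inter> space M |A. A \<in> sets borel}
          \<subseteq> {?V -` B \<inter> space M | B. B \<in> sets (Pi\<^sub>M {..<p} (\<lambda>_. borel :: real measure))}"
          by (rule vimage_family_sub[OF \<phi>m Yeq measurable_space[OF V_meas]])
        then show ?thesis using False by simp
      qed
    qed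
  qed
qed

lemma EUY: "integrable M (\<lambda>\<omega>. U \<omega> ^ k * Y a \<omega> ^ m)
  \<and> integral\<^sup>L M (\<lambda>\<omega>. U \<omega> ^ k * Y a \<omega> ^ m) = mU k * integral\<^sup>L M (\<lambda>\<omega>. Y a \<omega> ^ m)"
  using indep_var_lebesgue_integral[OF indep_UY int_mom Y_int]
        indep_var_integrable[OF indep_UY int_mom Y_int] by simp

lemma L_pow: "integrable M (\<lambda>\<omega>. (c * U \<omega> + Y a \<omega>) ^ n)
  \<and> integral\<^sup>L M (\<lambda>\<omega>. (c * U \<omega> + Y a \<omega>) ^ n)
     = (\<Sum>k\<le>n. (of_nat (n choose k) * c ^ k) * (mU k * integral\<^sup>L M (\<lambda>\<omega>. Y a \<omega> ^ (n - k))))"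
proof -
  have eq: "(\<lambda>\<omega>. (c * U \<omega> + Y a \<omega>) ^ n)
     = (\<lambda>\<omega>. \<Sum>k\<le>n. (of_nat (n choose k) * c ^ k) * (U \<omega> ^ k * Y a \<omega> ^ (n - k)))"
    by (simp add: binomial_ring power_mult_distrib mult_ac)
  show ?thesis unfolding eq using EUY
    by (simp add: integral_sum integrable_sum)
qed

lemma m0: "mU 0 = 1" by (simp add: prob_space)
lemma Y0: "integral\<^sup>L M (\<lambda>\<omega>. Y a \<omega> ^ 0) = 1" by (simp add: prob_space)

lemma L_int: "integrable M (\<lambda>\<omega>. (c * U \<omega> + Y a \<omega>) ^ n)" using L_pow by blast

lemma L1: "integral\<^sup>L M (\<lambda>\<omega>. (c * U \<omega> + Y a \<omega>) ^ 1) = c * mU 1"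
  using L_pow[of c a 1] Y_m1[of a] by (simp add: prob_space)

lemma L2: "integral\<^sup>L M (\<lambda>\<omega>. (c * U \<omega> + Y a \<omega>) ^ 2) = c^2 * mU 2 + q a"
proof -
  have "{..2::nat} = {0,1,2}" by auto
  then show ?thesis using L_pow[of c a 2] Y_m1[of a] Y_m2[of a] by (simp add: prob_space)
qed

lemma L3: "integral\<^sup>L M (\<lambda>\<omega>. (c * U \<omega> + Y a \<omega>) ^ 3) = c^3 * mU 3 + 3 * c * mU 1 * q a"
proof -
  have "{..3::nat} = {0,1,2,3}" by auto
  moreover have "(3::nat) choose 2 = 3" "(3::nat) choose 1 = 3" by (simp_all add: eval_nat_numeral)
  ultimately show ?thesis using L_pow[of c a 3] Y_m1[of a] Y_m2[of a] Y_m3[of a] by (simp add: prob_space)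
qed

lemma L4: "integral\<^sup>L M (\<lambda>\<omega>. (c * U \<omega> + Y a \<omega>) ^ 4) = c^4 * mU 4 + 6 * c^2 * mU 2 * q a + 3 * (q a)^2"
proof -
  have "{..4::nat} = {0,1,2,3,4}" by auto
  moreover have "(4::nat) choose 3 = 4" "(4::nat) choose 2 = 6" "(4::nat) choose 1 = 4"
    by (simp_all add: eval_nat_numeral)
  ultimately show ?thesis using L_pow[of c a 4] Y_m1[of a] Y_m2[of a] Y_m3[of a] Y_m4[of a] by (simp add: prob_space)
qed

definition Bq :: "(nat \<Rightarrow> real) \<Rightarrow> (nat \<Rightarrow> real) \<Rightarrow> real" where
  "Bq f1 f2 = (\<Sum>i<p. \<Sum>j<p. f1 i * S $$ (i,j) * f2 j)"

lemma q_Bq: "q a = Bq a a" by (simp add: q_def Bq_def)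
lemma Bq_addL: "Bq (\<lambda>n. f1 n + f2 n) h1 = Bq f1 h1 + Bq f2 h1" by (simp add: Bq_def distrib_right sum.distrib)
lemma Bq_addR: "Bq h1 (\<lambda>n. f1 n + f2 n) = Bq h1 f1 + Bq h1 f2" by (simp add: Bq_def distrib_left sum.distrib)
lemma Bq_smultL: "Bq (\<lambda>n. c * f1 n) h1 = c * Bq f1 h1" by (simp add: Bq_def sum_distrib_left mult_ac)
lemma Bq_smultR: "Bq h1 (\<lambda>n. c * f1 n) = c * Bq h1 f1" by (simp add: Bq_def sum_distrib_left mult_ac)
lemma Bq_ind: assumes "i < p" "j < p" shows "Bq (ind i) (ind j) = S $$ (i,j)"
proof -
  have "Bq (ind i) (ind j) = (\<Sum>n<p. ind i n * (\<Sum>m<p. S $$ (n,m) * ind j m))"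
    by (simp add: Bq_def sum_distrib_left mult_ac)
  also have "\<dots> = (\<Sum>n<p. ind i n * S $$ (n,j))" using assms by (simp add: sum_indR)
  also have "\<dots> = S $$ (i,j)" by (rule sum_indL[OF assms(1)])
  finally show ?thesis .
qed

lemmas Bq_simps = q_Bq Bq_addL Bq_addR Bq_smultL Bq_smultR Bq_ind

lemma Y_add: "Y (\<lambda>n. f1 n + f2 n) \<omega> = Y f1 \<omega> + Y f2 \<omega>" by (simp add: Y_def distrib_right sum.distrib)
lemma Y_smult: "Y (\<lambda>n. c * f1 n) \<omega> = c * Y f1 \<omega>" by (simp add: Y_def sum_distrib_left mult_ac)
lemma Y_ind: "i < p \<Longrightarrow> Y (ind i) \<omega> = Z i \<omega>" by (simp add: Y_def sum_indL)

lemmas Y_simps = Y_add Y_smult Y_ind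

lemma mom1: assumes "i < p"
  shows "integrable M (x i) \<and> integral\<^sup>L M (x i) = delta $$ (i,0) * mU 1"
proof -
  have eq: "x i = (\<lambda>\<omega>. (delta $$ (i,0) * U \<omega> + Y (ind i) \<omega>) ^ 1)"
    using assms by (simp add: fun_eq_iff x_def Y_ind)
  show ?thesis unfolding eq using L_int L1 by blast
qed

lemma mom2: assumes ij: "i < p" "j < p"
  shows "integrable M (\<lambda>\<omega>. x i \<omega> * x j \<omega>)
    \<and> integral\<^sup>L M (\<lambda>\<omega>. x i \<omega> * x j \<omega>) = S $$ (i,j) + mU 2 * delta $$ (i,0) * delta $$ (j,0)"
proof -
  define GG where "GG = (\<lambda>e1 e2 \<omega>. (e1 * x i \<omega> + e2 * x j \<omega>) ^ 2)"
  have Geq: "GG e1 e2 = (\<lambda>\<omega>. ((e1 * delta $$ (i,0) + e2 * delta $$ (j,0)) * U \<omega>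
      + Y (\<lambda>n. e1 * ind i n + e2 * ind j n) \<omega>) ^ 2)" for e1 e2
    using ij by (simp add: fun_eq_iff GG_def x_def Y_simps algebra_simps)
  have qeq: "q (\<lambda>n. e1 * ind i n + e2 * ind j n)
     = e1 * e1 * S $$ (i,i) + e2 * e2 * S $$ (j,j) + 2 * e1 * e2 * S $$ (i,j)" for e1 e2
    using ij S_sym[of i j] by (simp add: Bq_simps algebra_simps)
  have Gint: "integrable M (GG e1 e2)" for e1 e2 unfolding Geq by (rule L_int)
  have GI: "integral\<^sup>L M (GG e1 e2) = (e1 * delta $$ (i,0) + e2 * delta $$ (j,0)) ^ 2 * mU 2
      + (e1 * e1 * S $$ (i,i) + e2 * e2 * S $$ (j,j) + 2 * e1 * e2 * S $$ (i,j))" for e1 e2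
    unfolding Geq L2 qeq by simp
  have pw: "(\<lambda>\<omega>. x i \<omega> * x j \<omega>) = (\<lambda>\<omega>. Pol2 (\<lambda>e1 e2. GG e1 e2 \<omega>) / 2)"
    unfolding GG_def pol2_pow by simp
  have "integral\<^sup>L M (\<lambda>\<omega>. x i \<omega> * x j \<omega>) = integral\<^sup>L M (\<lambda>\<omega>. Pol2 (\<lambda>e1 e2. GG e1 e2 \<omega>)) / 2"
    unfolding pw by simp
  also have "\<dots> = Pol2 (\<lambda>e1 e2. integral\<^sup>L M (GG e1 e2)) / 2"
    using integral_Pol2(2)[of M GG, OF Gint] by simp
  also have "\<dots> = S $$ (i,j) + mU 2 * delta $$ (i,0) * delta $$ (j,0)"
    unfolding GI alg2 by simp
  finally show ?thesis using integral_Pol2(1)[of M GG, OF Gint] unfolding pw by simp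
qed

lemma mom3: assumes ijk: "i < p" "j < p" "k < p"
  shows "integrable M (\<lambda>\<omega>. x i \<omega> * x j \<omega> * x k \<omega>)
    \<and> integral\<^sup>L M (\<lambda>\<omega>. x i \<omega> * x j \<omega> * x k \<omega>)
      = mU 1 * (delta $$ (i,0) * S $$ (j,k) + delta $$ (j,0) * S $$ (i,k) + delta $$ (k,0) * S $$ (i,j))
        + mU 3 * delta $$ (i,0) * delta $$ (j,0) * delta $$ (k,0)"
proof -
  define GG where "GG = (\<lambda>e1 e2 e3 \<omega>. (e1 * x i \<omega> + e2 * x j \<omega> + e3 * x k \<omega>) ^ 3)"
  have Geq: "GG e1 e2 e3 = (\<lambda>\<omega>. ((e1 * delta $$ (i,0) + e2 * delta $$ (j,0) + e3 * delta $$ (k,0)) * U \<omega>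
      + Y (\<lambda>n. e1 * ind i n + e2 * ind j n + e3 * ind k n) \<omega>) ^ 3)" for e1 e2 e3
    using ijk by (simp add: fun_eq_iff GG_def x_def Y_simps algebra_simps)
  have qeq: "q (\<lambda>n. e1 * ind i n + e2 * ind j n + e3 * ind k n)
     = e1 * e1 * S $$ (i,i) + e2 * e2 * S $$ (j,j) + e3 * e3 * S $$ (k,k)
       + 2 * e1 * e2 * S $$ (i,j) + 2 * e1 * e3 * S $$ (i,k) + 2 * e2 * e3 * S $$ (j,k)" for e1 e2 e3
    using ijk S_sym[of i j] S_sym[of i k] S_sym[of j k] by (simp add: Bq_simps algebra_simps)
  have Gint: "integrable M (GG e1 e2 e3)" for e1 e2 e3 unfolding Geq by (rule L_int)
  have GI: "integral\<^sup>L M (GG e1 e2 e3) = (e1 * delta $$ (i,0) + e2 * delta $$ (j,0) + e3 * delta $$ (k,0)) ^ 3 * mU 3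
      + 3 * (e1 * delta $$ (i,0) + e2 * delta $$ (j,0) + e3 * delta $$ (k,0)) * mU 1 *
        (e1 * e1 * S $$ (i,i) + e2 * e2 * S $$ (j,j) + e3 * e3 * S $$ (k,k)
       + 2 * e1 * e2 * S $$ (i,j) + 2 * e1 * e3 * S $$ (i,k) + 2 * e2 * e3 * S $$ (j,k))" for e1 e2 e3
    unfolding Geq L3 qeq by simp
  have pw: "(\<lambda>\<omega>. x i \<omega> * x j \<omega> * x k \<omega>) = (\<lambda>\<omega>. Pol3 (\<lambda>e1 e2 e3. GG e1 e2 e3 \<omega>) / 6)"
    unfolding GG_def pol3_pow by (simp add: mult.assoc)
  have "integral\<^sup>L M (\<lambda>\<omega>. x i \<omega> * x j \<omega> * x k \<omega>) = integral\<^sup>L M (\<lambda>\<omega>. Pol3 (\<lambda>e1 e2 e3. GG e1 e2 e3 \<omega>)) / 6"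
    unfolding pw by simp
  also have "\<dots> = Pol3 (\<lambda>e1 e2 e3. integral\<^sup>L M (GG e1 e2 e3)) / 6"
    using integral_Pol3(2)[of M GG, OF Gint] by simp
  also have "\<dots> = mU 1 * (delta $$ (i,0) * S $$ (j,k) + delta $$ (j,0) * S $$ (i,k) + delta $$ (k,0) * S $$ (i,j))
        + mU 3 * delta $$ (i,0) * delta $$ (j,0) * delta $$ (k,0)"
    unfolding GI alg3 by simp
  finally show ?thesis using integral_Pol3(1)[of M GG, OF Gint] unfolding pw by simp
qed

lemma mom4: assumes ijkl: "i < p" "j < p" "k < p" "l < p"
  shows "integrable M (\<lambda>\<omega>. x i \<omega> * x j \<omega> * x k \<omega> * x l \<omega>)
    \<and> integral\<^sup>L M (\<lambda>\<omega>. x i \<omega> * x j \<omega> * x k \<omega> * x l \<omega>)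
      = S $$ (i,j) * S $$ (k,l) + S $$ (i,k) * S $$ (j,l) + S $$ (i,l) * S $$ (j,k)
        + mU 2 * (delta $$ (i,0) * delta $$ (j,0) * S $$ (k,l) + delta $$ (i,0) * delta $$ (k,0) * S $$ (j,l)
            + delta $$ (i,0) * delta $$ (l,0) * S $$ (j,k) + delta $$ (j,0) * delta $$ (k,0) * S $$ (i,l)
            + delta $$ (j,0) * delta $$ (l,0) * S $$ (i,k) + delta $$ (k,0) * delta $$ (l,0) * S $$ (i,j))
        + mU 4 * delta $$ (i,0) * delta $$ (j,0) * delta $$ (k,0) * delta $$ (l,0)"
proof -
  define GG where "GG = (\<lambda>e1 e2 e3 e4 \<omega>. (e1 * x i \<omega> + e2 * x j \<omega> + e3 * x k \<omega> + e4 * x l \<omega>) ^ 4)"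
  define c where "c = (\<lambda>e1 e2 e3 e4. e1 * delta $$ (i,0) + e2 * delta $$ (j,0) + e3 * delta $$ (k,0) + e4 * delta $$ (l,0))"
  define Q where "Q = (\<lambda>e1 e2 e3 e4. e1 * e1 * S $$ (i,i) + e2 * e2 * S $$ (j,j) + e3 * e3 * S $$ (k,k) + e4 * e4 * S $$ (l,l)
       + 2 * e1 * e2 * S $$ (i,j) + 2 * e1 * e3 * S $$ (i,k) + 2 * e1 * e4 * S $$ (i,l)
       + 2 * e2 * e3 * S $$ (j,k) + 2 * e2 * e4 * S $$ (j,l) + 2 * e3 * e4 * S $$ (k,l))"
  have Geq: "GG e1 e2 e3 e4 = (\<lambda>\<omega>. (c e1 e2 e3 e4 * U \<omega>
      + Y (\<lambda>n. e1 * ind i n + e2 * ind j n + e3 * ind k n + e4 * ind l n) \<omega>) ^ 4)" for e1 e2 e3 e4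
    using ijkl by (simp add: fun_eq_iff GG_def c_def x_def Y_simps algebra_simps)
  have qeq: "q (\<lambda>n. e1 * ind i n + e2 * ind j n + e3 * ind k n + e4 * ind l n) = Q e1 e2 e3 e4" for e1 e2 e3 e4
    unfolding Q_def
    using ijkl S_sym[of i j] S_sym[of i k] S_sym[of j k] S_sym[of i l] S_sym[of j l] S_sym[of k l]
    by (simp add: Bq_simps algebra_simps)
  have Gint: "integrable M (GG e1 e2 e3 e4)" for e1 e2 e3 e4 unfolding Geq by (rule L_int)
  have GI: "integral\<^sup>L M (GG e1 e2 e3 e4) = (c e1 e2 e3 e4) ^ 4 * mU 4
      + 6 * (c e1 e2 e3 e4) ^ 2 * mU 2 * Q e1 e2 e3 e4 + 3 * (Q e1 e2 e3 e4) ^ 2" for e1 e2 e3 e4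
    unfolding Geq L4 qeq by simp
  have pw: "(\<lambda>\<omega>. x i \<omega> * x j \<omega> * x k \<omega> * x l \<omega>) = (\<lambda>\<omega>. Pol4 (\<lambda>e1 e2 e3 e4. GG e1 e2 e3 e4 \<omega>) / 24)"
    unfolding GG_def pol4_pow by (simp add: mult.assoc)
  have "integral\<^sup>L M (\<lambda>\<omega>. x i \<omega> * x j \<omega> * x k \<omega> * x l \<omega>) = integral\<^sup>L M (\<lambda>\<omega>. Pol4 (\<lambda>e1 e2 e3 e4. GG e1 e2 e3 e4 \<omega>)) / 24"
    unfolding pw by simp
  also have "\<dots> = Pol4 (\<lambda>e1 e2 e3 e4. integral\<^sup>L M (GG e1 e2 e3 e4)) / 24"
    using integral_Pol4(2)[of M GG, OF Gint] by simp
  also have "\<dots> = S $$ (i,j) * S $$ (k,l) + S $$ (i,k) * S $$ (j,l) + S $$ (i,l) * S $$ (j,k)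
        + mU 2 * (delta $$ (i,0) * delta $$ (j,0) * S $$ (k,l) + delta $$ (i,0) * delta $$ (k,0) * S $$ (j,l)
            + delta $$ (i,0) * delta $$ (l,0) * S $$ (j,k) + delta $$ (j,0) * delta $$ (k,0) * S $$ (i,l)
            + delta $$ (j,0) * delta $$ (l,0) * S $$ (i,k) + delta $$ (k,0) * delta $$ (l,0) * S $$ (i,j))
        + mU 4 * delta $$ (i,0) * delta $$ (j,0) * delta $$ (k,0) * delta $$ (l,0)"
    unfolding GI c_def Q_def alg4 by simp
  finally show ?thesis using integral_Pol4(1)[of M GG, OF Gint] unfolding pw by simp
qed

end


lemma kron_dims[simp]: "dim_row (kron A B) = dim_row A * dim_row B" "dim_col (kron A B) = dim_col A * dim_col B"
  unfolding kron_def by simp_all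

lemma kron_index: "i < dim_row A * dim_row B \<Longrightarrow> j < dim_col A * dim_col B \<Longrightarrow>
  kron A B $$ (i,j) = A $$ (i div dim_row B, j div dim_col B) * B $$ (i mod dim_row B, j mod dim_col B)"
  unfolding kron_def by simp

lemma vecm_dims[simp]: "dim_row (vecm A) = dim_row A * dim_col A" "dim_col (vecm A) = 1"
  unfolding vecm_def by simp_all

lemma vecm_index: "i < dim_row A * dim_col A \<Longrightarrow> vecm A $$ (i,0) = A $$ (i mod dim_row A, i div dim_row A)"
  unfolding vecm_def by simp

lemma comm_dims[simp]: "dim_row (commutation_mat m n) = m * n" "dim_col (commutation_mat m n) = m * n"
  unfolding commutation_mat_def by simp_all

lemma comm_index: "r < m * n \<Longrightarrow> c < m * n \<Longrightarrow> commutation_mat m n $$ (r,c) = (if c = r div n + (r mod n) * m then 1 else 0)"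
  unfolding commutation_mat_def by simp

lemma mult_entry: "i < dim_row A \<Longrightarrow> j < dim_col B \<Longrightarrow> dim_col A = k \<Longrightarrow> dim_row B = k \<Longrightarrow>
  (A * B) $$ (i,j) = (\<Sum>l<k. A $$ (i,l) * B $$ (l,j))"
  by (simp add: scalar_prod_def atLeast0LessThan)

lemma pp_div: "(r::nat) < p * p \<Longrightarrow> r div p < p" by (metis less_mult_imp_div_less)
lemma pp_mod: "(r::nat) < p * p \<Longrightarrow> r mod p < p" by (cases "p = 0") auto

lemma sum_delta_real: "(a::nat) < n \<Longrightarrow> (\<Sum>l<n. (if a = l then 1 else 0) * (f l :: real)) = f a"
proof -
  assume "a < n"
  have "(\<Sum>l<n. (if a = l then 1 else 0) * f l) = (\<Sum>l<n. if a = l then f l else 0)"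
    by (intro sum.cong) auto
  also have "\<dots> = f a" using \<open>a < n\<close> by (subst sum.delta') auto
  finally show ?thesis .
qed

context
  fixes p :: nat and v d S :: "real mat"
  assumes v: "v \<in> carrier_mat p 1" and d: "d \<in> carrier_mat p 1" and S: "S \<in> carrier_mat p p"
begin

lemma e2: "i < p \<Longrightarrow> j < p \<Longrightarrow> (v * transpose_mat v) $$ (i,j) = v $$ (i,0) * v $$ (j,0)"
  using v by (subst mult_entry[where k=1]) auto

lemma e3: "r < p * p \<Longrightarrow> j < p \<Longrightarrow>
  kron (kron v (transpose_mat v)) v $$ (r,j) = v $$ (r div p, 0) * v $$ (j, 0) * v $$ (r mod p, 0)"
  using v pp_div[of r p] pp_mod[of r p] by (simp add: kron_index)

lemma e4: "r < p * p \<Longrightarrow> s < p * p \<Longrightarrow>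
  kron (v * transpose_mat v) (v * transpose_mat v) $$ (r,s)
  = v $$ (r div p, 0) * v $$ (s div p, 0) * (v $$ (r mod p, 0) * v $$ (s mod p, 0))"
  using v pp_div[of r p] pp_mod[of r p] pp_div[of s p] pp_mod[of s p] by (simp add: kron_index e2 del: index_mult_mat(1))

lemma r2: "i < p \<Longrightarrow> j < p \<Longrightarrow> kron d (transpose_mat d) $$ (i,j) = d $$ (i,0) * d $$ (j,0)"
  using d by (simp add: kron_index)

lemma r3a: "r < p * p \<Longrightarrow> j < p \<Longrightarrow> kron d S $$ (r,j) = d $$ (r div p, 0) * S $$ (r mod p, j)"
  using d S by (simp add: kron_index)

lemma r3b: "r < p * p \<Longrightarrow> j < p \<Longrightarrow> (vecm S * transpose_mat d) $$ (r,j) = S $$ (r mod p, r div p) * d $$ (j,0)"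
  using d S pp_div[of r p] pp_mod[of r p] by (subst mult_entry[where k=1]) (auto simp: vecm_index)

lemma kI: "r < p * p \<Longrightarrow> l < p \<Longrightarrow> kron (1\<^sub>m p) d $$ (r,l) = (if r div p = l then 1 else 0) * d $$ (r mod p, 0)"
  using d pp_div[of r p] pp_mod[of r p] by (simp add: kron_index)

lemma r3c: "r < p * p \<Longrightarrow> j < p \<Longrightarrow> (kron (1\<^sub>m p) d * S) $$ (r,j) = d $$ (r mod p, 0) * S $$ (r div p, j)"
proof -
  assume rj: "r < p * p" "j < p"
  have "(kron (1\<^sub>m p) d * S) $$ (r,j) = (\<Sum>l<p. kron (1\<^sub>m p) d $$ (r,l) * S $$ (l,j))"
    using d S rj by (intro mult_entry) auto
  also have "\<dots> = (\<Sum>l<p. (if r div p = l then 1 else 0) * (d $$ (r mod p, 0) * S $$ (l,j)))"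
    using rj by (intro sum.cong) (auto simp: kI)
  also have "\<dots> = d $$ (r mod p, 0) * S $$ (r div p, j)"
    using pp_div[OF rj(1)] by (rule sum_delta_real)
  finally show ?thesis .
qed

lemma r3d: "r < p * p \<Longrightarrow> j < p \<Longrightarrow> (kron (1\<^sub>m p) d * kron d (transpose_mat d)) $$ (r,j)
   = d $$ (r mod p, 0) * d $$ (r div p, 0) * d $$ (j, 0)"
proof -
  assume rj: "r < p * p" "j < p"
  have "(kron (1\<^sub>m p) d * kron d (transpose_mat d)) $$ (r,j) = (\<Sum>l<p. kron (1\<^sub>m p) d $$ (r,l) * kron d (transpose_mat d) $$ (l,j))"
    using d rj by (intro mult_entry) auto
  also have "\<dots> = (\<Sum>l<p. (if r div p = l then 1 else 0) * (d $$ (r mod p, 0) * (d $$ (l,0) * d $$ (j,0))))"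
    using rj by (intro sum.cong) (auto simp: kI r2)
  also have "\<dots> = d $$ (r mod p, 0) * (d $$ (r div p, 0) * d $$ (j,0))"
    using pp_div[OF rj(1)] by (rule sum_delta_real)
  finally show ?thesis by simp
qed

lemma r4a: "r < p * p \<Longrightarrow> s < p * p \<Longrightarrow> ((1\<^sub>m (p * p) + commutation_mat p p) * kron S S) $$ (r,s)
  = S $$ (r div p, s div p) * S $$ (r mod p, s mod p) + S $$ (r mod p, s div p) * S $$ (r div p, s mod p)"
proof -
  assume rs: "r < p * p" "s < p * p"
  have p0: "0 < p" using rs by (cases p) auto
  define r' where "r' = r div p + (r mod p) * p"
  have r': "r' < p * p"
  proof -
    have "r mod p * p + p \<le> p * p" using pp_mod[OF rs(1)]
      by (metis add.commute mult.commute mult_Suc_right Suc_leI mult_le_mono2)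
    then show ?thesis using pp_div[OF rs(1)] unfolding r'_def by linarith
  qed
  have r'd: "r' div p = r mod p" "r' mod p = r div p"
    using p0 pp_div[OF rs(1)] unfolding r'_def by simp_all
  have "((1\<^sub>m (p * p) + commutation_mat p p) * kron S S) $$ (r,s)
      = (\<Sum>l<p*p. (1\<^sub>m (p * p) + commutation_mat p p) $$ (r,l) * kron S S $$ (l,s))"
    using S rs by (intro mult_entry) auto
  also have "\<dots> = (\<Sum>l<p*p. (if r = l then 1 else 0) * kron S S $$ (l,s))
       + (\<Sum>l<p*p. (if r' = l then 1 else 0) * kron S S $$ (l,s))"
    unfolding sum.distrib[symmetric]
    using rs by (intro sum.cong) (auto simp: comm_index r'_def distrib_right)
  also have "\<dots> = kron S S $$ (r,s) + kron S S $$ (r',s)"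
    using rs r' by (simp add: sum_delta_real)
  also have "\<dots> = S $$ (r div p, s div p) * S $$ (r mod p, s mod p) + S $$ (r mod p, s div p) * S $$ (r div p, s mod p)"
    using S rs r' r'd by (simp add: kron_index)
  finally show ?thesis .
qed

lemma r4b: "r < p * p \<Longrightarrow> s < p * p \<Longrightarrow> (vecm S * transpose_mat (vecm S)) $$ (r,s)
  = S $$ (r mod p, r div p) * S $$ (s mod p, s div p)"
  using S by (subst mult_entry[where k=1]) (auto simp: vecm_index)

lemma r4c: "r < p * p \<Longrightarrow> s < p * p \<Longrightarrow> kron (kron d (transpose_mat d)) S $$ (r,s)
  = d $$ (r div p, 0) * d $$ (s div p, 0) * S $$ (r mod p, s mod p)"
  using d S pp_div[of r p] pp_mod[of r p] pp_div[of s p] pp_mod[of s p] by (simp add: kron_index)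

lemma r4d: "r < p * p \<Longrightarrow> s < p * p \<Longrightarrow> kron (kron d S) (transpose_mat d) $$ (r,s)
  = d $$ (r div p, 0) * S $$ (r mod p, s div p) * d $$ (s mod p, 0)"
  using d S pp_div[of r p] pp_mod[of r p] pp_div[of s p] pp_mod[of s p] by (simp add: kron_index)

lemma r4e: "r < p * p \<Longrightarrow> s < p * p \<Longrightarrow> kron (kron S d) (transpose_mat d) $$ (r,s)
  = S $$ (r div p, s div p) * d $$ (r mod p, 0) * d $$ (s mod p, 0)"
  using d S pp_div[of r p] pp_mod[of r p] pp_div[of s p] pp_mod[of s p] by (simp add: kron_index)

lemma r4f: "r < p * p \<Longrightarrow> s < p * p \<Longrightarrow> kron (kron (transpose_mat d) S) d $$ (r,s)
  = d $$ (s div p, 0) * S $$ (r div p, s mod p) * d $$ (r mod p, 0)"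
  using d S pp_div[of r p] pp_mod[of r p] pp_div[of s p] pp_mod[of s p] by (simp add: kron_index)

lemma r4g: "r < p * p \<Longrightarrow> s < p * p \<Longrightarrow> kron (kron (transpose_mat d) (vecm S)) (transpose_mat d) $$ (r,s)
  = d $$ (s div p, 0) * S $$ (r mod p, r div p) * d $$ (s mod p, 0)"
  using d S pp_div[of r p] pp_mod[of r p] pp_div[of s p] pp_mod[of s p] by (simp add: kron_index vecm_index)

lemma r4h: "r < p * p \<Longrightarrow> s < p * p \<Longrightarrow> (kron d d * transpose_mat (vecm S)) $$ (r,s)
  = d $$ (r div p, 0) * d $$ (r mod p, 0) * S $$ (s mod p, s div p)"
  using d S pp_div[of r p] pp_mod[of r p] by (subst mult_entry[where k=1]) (auto simp: kron_index vecm_index)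

lemma r4i: "r < p * p \<Longrightarrow> s < p * p \<Longrightarrow> kron (d * transpose_mat d) (d * transpose_mat d) $$ (r,s)
  = d $$ (r div p, 0) * d $$ (s div p, 0) * (d $$ (r mod p, 0) * d $$ (s mod p, 0))"
proof -
  have e2d: "i < p \<Longrightarrow> j < p \<Longrightarrow> (d * transpose_mat d) $$ (i,j) = d $$ (i,0) * d $$ (j,0)" for i j
    using d by (subst mult_entry[where k=1]) auto
  assume "r < p * p" "s < p * p"
  then show ?thesis
    using d pp_div[of r p] pp_mod[of r p] pp_div[of s p] pp_mod[of s p] by (simp add: kron_index e2d del: index_mult_mat(1))
qed

end


theorem lemma2:
  fixes M :: "'a measure" and p :: nat and Omega delta :: "real mat"
    and U :: "'a \<Rightarrow> real" and Z :: "nat \<Rightarrow> 'a \<Rightarrow> real"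
    and Sigma :: "real mat" and X :: "'a \<Rightarrow> real mat"
  assumes P: "prob_space M"
    and Omega: "correlation_mat p Omega"
    and delta: "delta \<in> carrier_mat p 1"
    and Sigma_def: "Sigma \<equiv> Omega - delta * transpose_mat delta"
    and Sigma_pd: "pos_def_mat p Sigma"
    and U_rv: "U \<in> borel_measurable M"
    and Z_normal: "centred_mvnormal M p Z Sigma"
    and indep: "prob_space.indep_set M
                  {U -` A \<inter> space M | A. A \<in> sets borel}
                  {(\<lambda>\<omega>. \<lambda>i\<in>{..<p}. Z i \<omega>) -` B \<inter> space M | B.
                     B \<in> sets (Pi\<^sub>M {..<p} (\<lambda>_. borel :: real measure))}"
    and mgf: "\<exists>e>0. \<forall>t. \<bar>t\<bar> < e \<longrightarrow> integrable M (\<lambda>\<omega>. exp (t * U \<omega>))"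
    and X_def: "X \<equiv> \<lambda>\<omega>. mat p 1 (\<lambda>(i,_). delta $$ (i,0) * U \<omega> + Z i \<omega>)"
  shows "(\<forall>k\<in>{1..4::nat}. (deriv ^^ k) (\<lambda>t. integral\<^sup>L M (\<lambda>\<omega>. exp (t * U \<omega>))) 0
              = integral\<^sup>L M (\<lambda>\<omega>. U \<omega> ^ k))
    \<and> mat_expect M p 1 X = integral\<^sup>L M U \<cdot>\<^sub>m delta
    \<and> mat_expect M p p (\<lambda>\<omega>. X \<omega> * transpose_mat (X \<omega>))
        = Sigma + integral\<^sup>L M (\<lambda>\<omega>. U \<omega> ^ 2) \<cdot>\<^sub>m kron delta (transpose_mat delta)
    \<and> mat_expect M (p * p) p (\<lambda>\<omega>. kron (kron (X \<omega>) (transpose_mat (X \<omega>))) (X \<omega>))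
        = integral\<^sup>L M U \<cdot>\<^sub>m (kron delta Sigma + vecm Sigma * transpose_mat delta
                                + kron (1\<^sub>m p) delta * Sigma)
          + integral\<^sup>L M (\<lambda>\<omega>. U \<omega> ^ 3) \<cdot>\<^sub>m
              (kron (1\<^sub>m p) delta * kron delta (transpose_mat delta))
    \<and> mat_expect M (p * p) (p * p) (\<lambda>\<omega>. kron (X \<omega> * transpose_mat (X \<omega>)) (X \<omega> * transpose_mat (X \<omega>)))
        = (1\<^sub>m (p * p) + commutation_mat p p) * kron Sigma Sigma
          + vecm Sigma * transpose_mat (vecm Sigma)
          + integral\<^sup>L M (\<lambda>\<omega>. U \<omega> ^ 2) \<cdot>\<^sub>m
              (kron (kron delta (transpose_mat delta)) Sigma
               + kron (kron delta Sigma) (transpose_mat delta)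
               + kron (kron Sigma delta) (transpose_mat delta)
               + kron (kron (transpose_mat delta) Sigma) delta
               + kron (kron (transpose_mat delta) (vecm Sigma)) (transpose_mat delta)
               + kron delta delta * transpose_mat (vecm Sigma))
          + integral\<^sup>L M (\<lambda>\<omega>. U \<omega> ^ 4) \<cdot>\<^sub>m
              kron (delta * transpose_mat delta) (delta * transpose_mat delta)"
proof -
  interpret PS: prob_space M by (rule P)
  obtain e where e: "e > 0" "\<And>t. \<bar>t\<bar> < e \<Longrightarrow> integrable M (\<lambda>\<omega>. exp (t * U \<omega>))"
    using mgf by blast
  have Sc: "Sigma \<in> carrier_mat p p" and St: "transpose_mat Sigma = Sigma"
    using Sigma_pd unfolding pos_def_mat_def by auto
  have S_sym: "Sigma $$ (j,i) = Sigma $$ (i,j)" if "i < p" "j < p" for i j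
  proof -
    have "transpose_mat Sigma $$ (i,j) = Sigma $$ (j,i)" using Sc that by simp
    then show ?thesis using St by simp
  qed
  interpret ms: main_setting M U e p Z Sigma delta
    by unfold_locales (use P U_rv e Z_normal indep S_sym in auto)
  have dd: "dim_row delta = p" "dim_col delta = 1" using delta by auto
  have dS: "dim_row Sigma = p" "dim_col Sigma = p" using Sc by auto
  have Xc: "X \<omega> \<in> carrier_mat p 1" for \<omega> unfolding X_def by simp
  have Xi: "X \<omega> $$ (i,0) = ms.x i \<omega>" if "i < p" for i \<omega>
    unfolding X_def ms.x_def using that by simp
  have ME: "mat_expect M r c F $$ (i,j) = integral\<^sup>L M (\<lambda>\<omega>. F \<omega> $$ (i,j))" if "i < r" "j < c" for r c F i j
    unfolding mat_expect_def using that by simp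
  have MEd: "dim_row (mat_expect M r c F) = r" "dim_col (mat_expect M r c F) = c" for r c F
    unfolding mat_expect_def by simp_all
  have part1: "\<forall>k\<in>{1..4::nat}. (deriv ^^ k) (\<lambda>t. integral\<^sup>L M (\<lambda>\<omega>. exp (t * U \<omega>))) 0
              = integral\<^sup>L M (\<lambda>\<omega>. U \<omega> ^ k)"
    using ms.mgf_derivs by blast
  have m1: "integral\<^sup>L M U = ms.mU 1" by simp
  have part2: "mat_expect M p 1 X = integral\<^sup>L M U \<cdot>\<^sub>m delta"
  proof (rule eq_matI)
    fix i j assume ij: "i < dim_row (integral\<^sup>L M U \<cdot>\<^sub>m delta)" "j < dim_col (integral\<^sup>L M U \<cdot>\<^sub>m delta)"
    then have i: "i < p" and j: "j = 0" using dd by auto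
    have "mat_expect M p 1 X $$ (i,j) = integral\<^sup>L M (ms.x i)"
      using i j by (simp add: ME Xi)
    also have "\<dots> = delta $$ (i,0) * ms.mU 1" using ms.mom1[OF i] by blast
    also have "\<dots> = (integral\<^sup>L M U \<cdot>\<^sub>m delta) $$ (i,j)" using i j dd by simp
    finally show "mat_expect M p 1 X $$ (i,j) = (integral\<^sup>L M U \<cdot>\<^sub>m delta) $$ (i,j)" .
  qed (simp_all add: MEd dd)
  have part3: "mat_expect M p p (\<lambda>\<omega>. X \<omega> * transpose_mat (X \<omega>))
        = Sigma + integral\<^sup>L M (\<lambda>\<omega>. U \<omega> ^ 2) \<cdot>\<^sub>m kron delta (transpose_mat delta)"
  proof (rule eq_matI)
    fix i j assume ij: "i < dim_row (Sigma + integral\<^sup>L M (\<lambda>\<omega>. U \<omega> ^ 2) \<cdot>\<^sub>m kron delta (transpose_mat delta))"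
      "j < dim_col (Sigma + integral\<^sup>L M (\<lambda>\<omega>. U \<omega> ^ 2) \<cdot>\<^sub>m kron delta (transpose_mat delta))"
    then have i: "i < p" and j: "j < p" using dd by auto
    have "mat_expect M p p (\<lambda>\<omega>. X \<omega> * transpose_mat (X \<omega>)) $$ (i,j) = integral\<^sup>L M (\<lambda>\<omega>. ms.x i \<omega> * ms.x j \<omega>)"
      using i j by (simp add: ME e2[OF Xc delta Sc] Xi)
    also have "\<dots> = Sigma $$ (i,j) + ms.mU 2 * delta $$ (i,0) * delta $$ (j,0)" using ms.mom2[OF i j] by blast
    also have "\<dots> = (Sigma + integral\<^sup>L M (\<lambda>\<omega>. U \<omega> ^ 2) \<cdot>\<^sub>m kron delta (transpose_mat delta)) $$ (i,j)"
      using i j dd by (simp add: r2[OF Xc delta Sc])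
    finally show "mat_expect M p p (\<lambda>\<omega>. X \<omega> * transpose_mat (X \<omega>)) $$ (i,j)
       = (Sigma + integral\<^sup>L M (\<lambda>\<omega>. U \<omega> ^ 2) \<cdot>\<^sub>m kron delta (transpose_mat delta)) $$ (i,j)" .
  qed (simp_all add: MEd dd dS)
  have part4: "mat_expect M (p * p) p (\<lambda>\<omega>. kron (kron (X \<omega>) (transpose_mat (X \<omega>))) (X \<omega>))
        = integral\<^sup>L M U \<cdot>\<^sub>m (kron delta Sigma + vecm Sigma * transpose_mat delta
                                + kron (1\<^sub>m p) delta * Sigma)
          + integral\<^sup>L M (\<lambda>\<omega>. U \<omega> ^ 3) \<cdot>\<^sub>m
              (kron (1\<^sub>m p) delta * kron delta (transpose_mat delta))"
    (is "?L = ?R")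
  proof (rule eq_matI)
    fix r j assume rj: "r < dim_row ?R" "j < dim_col ?R"
    then have r: "r < p * p" and j: "j < p" using dd dS by auto
    define a where "a = r div p"
    define c where "c = r mod p"
    have a: "a < p" and c: "c < p" unfolding a_def c_def using pp_div[OF r] pp_mod[OF r] by auto
    have "?L $$ (r,j) = integral\<^sup>L M (\<lambda>\<omega>. ms.x a \<omega> * ms.x j \<omega> * ms.x c \<omega>)"
      using r j a c by (simp add: ME e3[OF Xc delta Sc] Xi a_def c_def)
    also have "\<dots> = ms.mU 1 * (delta $$ (a,0) * Sigma $$ (j,c) + delta $$ (j,0) * Sigma $$ (a,c) + delta $$ (c,0) * Sigma $$ (a,j))
        + ms.mU 3 * delta $$ (a,0) * delta $$ (j,0) * delta $$ (c,0)" using ms.mom3[OF a j c] by blast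
    also have "\<dots> = ?R $$ (r,j)"
      using r j dd dS S_sym[OF j c] S_sym[OF a c]
      by (simp add: r3a[OF Xc delta Sc] r3b[OF Xc delta Sc] r3c[OF Xc delta Sc] r3d[OF Xc delta Sc]
          a_def[symmetric] c_def[symmetric] algebra_simps del: index_mult_mat(1))
    finally show "?L $$ (r,j) = ?R $$ (r,j)" .
  qed (simp_all add: MEd dd dS)
  have part5: "mat_expect M (p * p) (p * p) (\<lambda>\<omega>. kron (X \<omega> * transpose_mat (X \<omega>)) (X \<omega> * transpose_mat (X \<omega>)))
        = (1\<^sub>m (p * p) + commutation_mat p p) * kron Sigma Sigma
          + vecm Sigma * transpose_mat (vecm Sigma)
          + integral\<^sup>L M (\<lambda>\<omega>. U \<omega> ^ 2) \<cdot>\<^sub>m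
              (kron (kron delta (transpose_mat delta)) Sigma
               + kron (kron delta Sigma) (transpose_mat delta)
               + kron (kron Sigma delta) (transpose_mat delta)
               + kron (kron (transpose_mat delta) Sigma) delta
               + kron (kron (transpose_mat delta) (vecm Sigma)) (transpose_mat delta)
               + kron delta delta * transpose_mat (vecm Sigma))
          + integral\<^sup>L M (\<lambda>\<omega>. U \<omega> ^ 4) \<cdot>\<^sub>m
              kron (delta * transpose_mat delta) (delta * transpose_mat delta)"
    (is "?L = ?R")
  proof (rule eq_matI)
    fix r s assume rs: "r < dim_row ?R" "s < dim_col ?R"
    then have r: "r < p * p" and s: "s < p * p" using dd dS by auto
    define a where "a = r div p"
    define c where "c = r mod p"
    define b where "b = s div p"
    define d where "d = s mod p"
    have a: "a < p" and c: "c < p" unfolding a_def c_def using pp_div[OF r] pp_mod[OF r] by auto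
    have b: "b < p" and d: "d < p" unfolding b_def d_def using pp_div[OF s] pp_mod[OF s] by auto
    have "?L $$ (r,s) = integral\<^sup>L M (\<lambda>\<omega>. ms.x a \<omega> * ms.x b \<omega> * ms.x c \<omega> * ms.x d \<omega>)"
      using r s a b c d by (simp add: ME e4[OF Xc delta Sc] Xi a_def b_def c_def d_def mult.assoc)
    also have "\<dots> = Sigma $$ (a,b) * Sigma $$ (c,d) + Sigma $$ (a,c) * Sigma $$ (b,d) + Sigma $$ (a,d) * Sigma $$ (b,c)
        + ms.mU 2 * (delta $$ (a,0) * delta $$ (b,0) * Sigma $$ (c,d) + delta $$ (a,0) * delta $$ (c,0) * Sigma $$ (b,d)
            + delta $$ (a,0) * delta $$ (d,0) * Sigma $$ (b,c) + delta $$ (b,0) * delta $$ (c,0) * Sigma $$ (a,d)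
            + delta $$ (b,0) * delta $$ (d,0) * Sigma $$ (a,c) + delta $$ (c,0) * delta $$ (d,0) * Sigma $$ (a,b))
        + ms.mU 4 * delta $$ (a,0) * delta $$ (b,0) * delta $$ (c,0) * delta $$ (d,0)"
      using ms.mom4[OF a b c d] by blast
    also have "\<dots> = ?R $$ (r,s)"
      using r s dd dS S_sym[OF b c] S_sym[OF a c] S_sym[OF b d]
      by (simp add: r4a[OF Xc delta Sc] r4b[OF Xc delta Sc] r4c[OF Xc delta Sc] r4d[OF Xc delta Sc]
          r4e[OF Xc delta Sc] r4f[OF Xc delta Sc] r4g[OF Xc delta Sc] r4h[OF Xc delta Sc] r4i[OF Xc delta Sc]
          a_def[symmetric] b_def[symmetric] c_def[symmetric] d_def[symmetric] algebra_simps del: index_mult_mat(1))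
    finally show "?L $$ (r,s) = ?R $$ (r,s)" .
  qed (simp_all add: MEd dd dS)
  show ?thesis using part1 part2 part3 part4 part5 by blast
qed

end
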